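(* Consider a two-dimensional no-slip billiard system in a disc. If the first collision satisfies the rolling impact condition, then all subsequent collisions also satisfy it, the times between consecutive collisions are all equal, and the center of mass of the moving particle undergoes specular reflection at each collision (i.e. the post-collision center-of-mass velocity is $u-2(u\cdot\nu_a)\nu_a$ where $u$ is the pre-collision one).
   Context: Here $n=2$: the moving particle is a disc of radius $r>0$ with a rotationally symmetric mass distribution of total mass $m$ whose second-moment matrix per unit mass is $\lambda I$, $\lambda=(r\gamma)^2/2$, $\gamma>0$. Put $c=\frac{1-\gamma^2}{1+\gamma^2}$, $s=\frac{2\gamma}{1+\gamma^2}$, and for $a,b\in\mathbb{R}^2$ let $a\wedge b\in\mathfrak{so}(2)$ be $(a\wedge b)x=(a\cdot x)b-(b\cdot x)a$. The billiard domain $\mathcal{B}$ (the set of admissible centers) is a disc; at $a\in\partial\mathcal{B}$, $\nu_a$ is the unit normal pointing into $\mathcal{B}$. A state is $(a,u,U)$ with $u$ the center-of-mass velocity and $U\in\mathfrak{so}(2)$ the angular velocity matrix. Between collisions $U$ is constant and the center of mass moves freely; at a collision at $a$ the pre-collision $(u,U)$ is replaced by $C_a(u,U)=\big(cu-\tfrac{s}{\gamma}(u\cdot\nu_a)\nu_a+s\gamma rU\nu_a,\ \tfrac{s}{\gamma r}\nu_a\wedge u+U-\tfrac{s}{\gamma}\nu_a\wedge U\nu_a\big)$. A pre-collision state $(a,u,U)$ satisfies the rolling impact condition if the orthogonal projection of $v=u-rU\nu_a$ onto the tangent line $T_a\partial\mathcal{B}$ is zero. *)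

theory Defs
  imports "HOL-Analysis.Analysis"
begin

type_synonym vec2 = "real^2"
type_synonym mat2 = "real^2^2"

text \<open>Vectors of the plane are
  \<open>real^2\<close>, angular velocity matrices are \<open>real^2^2\<close> (elements of so(2) are
  the skew-symmetric ones). The billiard domain (set of admissible centers)
  is the disc \<open>cball p R\<close>, with boundary \<open>sphere p R\<close>.\<close>

text \<open>The wedge \<open>a \<and> b\<close>, acting by \<open>x \<mapsto> (a\<bullet>x) b - (b\<bullet>x) a\<close>.\<close>
definition wedge :: "real^2 \<Rightarrow> real^2 \<Rightarrow> real^2^2" where
  "wedge a b = (\<chi> i j. b$i * a$j - a$i * b$j)"

definition in_so2 :: "real^2^2 \<Rightarrow> bool" where
  "in_so2 U \<longleftrightarrow> transpose U = - U"

definition inward_normal :: "real^2 \<Rightarrow> real \<Rightarrow> real^2 \<Rightarrow> real^2" where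
  "inward_normal p R a = (1 / R) *\<^sub>R (p - a)"

definition cc :: "real \<Rightarrow> real" where "cc \<gamma> = (1 - \<gamma>^2) / (1 + \<gamma>^2)"
definition ss :: "real \<Rightarrow> real" where "ss \<gamma> = (2 * \<gamma>) / (1 + \<gamma>^2)"

definition collision_map ::
  "real \<Rightarrow> real \<Rightarrow> real^2 \<Rightarrow> vec2 \<times> mat2 \<Rightarrow> vec2 \<times> mat2" where
  "collision_map \<gamma> r \<nu> uU = (case uU of (u, U) \<Rightarrow>
     (cc \<gamma> *\<^sub>R u - (ss \<gamma> / \<gamma>) *\<^sub>R ((u \<bullet> \<nu>) *\<^sub>R \<nu>) + (ss \<gamma> * \<gamma> * r) *\<^sub>R (U *v \<nu>),
      (ss \<gamma> / (\<gamma> * r)) *\<^sub>R wedge \<nu> u + U - (ss \<gamma> / \<gamma>) *\<^sub>R wedge \<nu> (U *v \<nu>)))"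

definition rolling_impact :: "real^2 \<Rightarrow> real \<Rightarrow> real \<Rightarrow> real^2 \<Rightarrow> real^2 \<Rightarrow> real^2^2 \<Rightarrow> bool" where
  "rolling_impact p R r a u U \<longleftrightarrow>
     (let \<nu> = inward_normal p R a; v = u - r *\<^sub>R (U *v \<nu>) in v - (v \<bullet> \<nu>) *\<^sub>R \<nu> = 0)"

definition next_time :: "real^2 \<Rightarrow> real \<Rightarrow> real^2 \<Rightarrow> real^2 \<Rightarrow> real" where
  "next_time p R a w = Inf {t. 0 < t \<and> a + t *\<^sub>R w \<in> sphere p R}"

text \<open>The sequence of pre-collision states \<open>(a_k, u_k, U_k)\<close> at the k-th collision
  (k = 0 is the first collision).\<close>
fun collisions :: "real \<Rightarrow> real \<Rightarrow> real^2 \<Rightarrow> real \<Rightarrow> vec2 \<times> vec2 \<times> mat2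
                   \<Rightarrow> nat \<Rightarrow> vec2 \<times> vec2 \<times> mat2" where
  "collisions \<gamma> r p R s0 0 = s0"
| "collisions \<gamma> r p R s0 (Suc k) =
     (case collisions \<gamma> r p R s0 k of (a, u, U) \<Rightarrow>
        (case collision_map \<gamma> r (inward_normal p R a) (u, U) of (u', U') \<Rightarrow>
           (a + next_time p R a u' *\<^sub>R u', u', U')))"

definition flight_time :: "real \<Rightarrow> real \<Rightarrow> real^2 \<Rightarrow> real \<Rightarrow> vec2 \<times> vec2 \<times> mat2
                   \<Rightarrow> nat \<Rightarrow> real" where
  "flight_time \<gamma> r p R s0 k = (case collisions \<gamma> r p R s0 k of (a, u, U) \<Rightarrow>
      next_time p R a (fst (collision_map \<gamma> r (inward_normal p R a) (u, U))))"

end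

theory Submission
  imports Defs
begin
lemma vec2_eq: "(x::real^2) = y \<longleftrightarrow> x$1 = y$1 \<and> x$2 = y$2"
  by (simp add: vec_eq_iff forall_2)
lemma mat2_eq: "(x::real^2^2) = y \<longleftrightarrow> x$1$1 = y$1$1 \<and> x$1$2 = y$1$2 \<and> x$2$1 = y$2$1 \<and> x$2$2 = y$2$2"
  by (simp add: vec_eq_iff forall_2)
lemma inner2: "(x::real^2) \<bullet> y = x$1*y$1 + x$2*y$2"
  by (simp add: inner_vec_def sum_2)
lemma mv2: "((A::real^2^2) *v x)$1 = A$1$1*x$1 + A$1$2*x$2"
   "((A::real^2^2) *v x)$2 = A$2$1*x$1 + A$2$2*x$2"
  by (simp_all add: matrix_vector_mult_def sum_2)
lemma wedge2: "wedge a b $1$1 = 0" "wedge a b $2$2 = 0"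
  "wedge a b $1$2 = b$1*a$2 - a$1*b$2" "wedge a b $2$1 = b$2*a$1 - a$2*b$1"
  by (simp_all add: wedge_def)
definition skew2 :: "real^2^2 \<Rightarrow> bool" where
  "skew2 U \<longleftrightarrow> U$1$1 = 0 \<and> U$2$2 = 0 \<and> U$1$2 = - U$2$1"

lemma cc_ss: "g > 0 \<Longrightarrow> cc g = 1 - ss g * g" "g > 0 \<Longrightarrow> ss g / g = 2 - ss g * g"
proof -
  have "1 + g^2 > 0" by (simp add: add_pos_nonneg)
  then show "g > 0 \<Longrightarrow> cc g = 1 - ss g * g"
    unfolding cc_def ss_def by (simp_all add: field_simps, simp_all add: algebra_simps power2_eq_square)
  assume g: "g > 0"
  have a: "ss g / g = 2 / (1 + g^2)" unfolding ss_def using g by simp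
  have b: "2 - ss g * g = 2 / (1 + g^2)" unfolding ss_def using \<open>1 + g^2 > 0\<close> by (simp add: field_simps power2_eq_square)
  show "ss g / g = 2 - ss g * g" using a b by simp
qed

lemma alg1: fixes n1 n2 u1 u2 r w S :: real
  assumes n: "n1^2 + n2^2 = 1" and h: "u1*n2 - u2*n1 + r*w = 0"
  shows "(1-S)*u1 - (2-S)*((u1*n1+u2*n2)*n1) + S*r*(-w*n2) = u1 - 2*(u1*n1+u2*n2)*n1"
proof -
  have rw: "r*w = -(u1*n2 - u2*n1)" using h by simp
  have "S*r*(-w*n2) = -(S*n2)*(r*w)" by (simp add: algebra_simps)
  also have "\<dots> = S*n2*(u1*n2 - u2*n1)" unfolding rw by (simp add: algebra_simps)
  finally have e: "S*r*(-w*n2) = S*n2*(u1*n2 - u2*n1)" .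
  have "u1*n1^2+u1*n2^2 = u1" "S*u1*n1^2 + S*u1*n2^2 = S*u1" using n by (simp_all add: distrib_left[symmetric])
  then show ?thesis unfolding e by (simp add: algebra_simps power2_eq_square)
qed

lemma alg2: fixes n1 n2 u1 u2 r w S :: real
  assumes n: "n1^2 + n2^2 = 1" and h: "u1*n2 - u2*n1 + r*w = 0"
  shows "(1-S)*u2 - (2-S)*((u1*n1+u2*n2)*n2) + S*r*(w*n1) = u2 - 2*(u1*n1+u2*n2)*n2"
proof -
  have rw: "r*w = -(u1*n2 - u2*n1)" using h by simp
  have "S*r*(w*n1) = (S*n1)*(r*w)" by (simp add: algebra_simps)
  also have "\<dots> = - S*n1*(u1*n2 - u2*n1)" unfolding rw by (simp add: algebra_simps)
  finally have e: "S*r*(w*n1) = - S*n1*(u1*n2 - u2*n1)" .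
  have "u2*n1^2+u2*n2^2 = u2" "S*u2*n1^2 + S*u2*n2^2 = S*u2" using n by (simp_all add: distrib_left[symmetric])
  then show ?thesis unfolding e by (simp add: algebra_simps power2_eq_square)
qed

lemma cm: fixes n u :: "real^2" and U :: "real^2^2"
  assumes g: "\<gamma> > 0" and r: "r > 0" and n: "n$1^2 + n$2^2 = 1" and sk: "skew2 U"
    and h: "u$1*n$2 - u$2*n$1 + r*U$2$1 = 0"
  shows "collision_map \<gamma> r n (u, U) = (u - (2 * (u \<bullet> n)) *\<^sub>R n, U)"
proof -
  define S where "S = ss \<gamma> * \<gamma>"
  have cc: "cc \<gamma> = 1 - S" and sg: "ss \<gamma> / \<gamma> = 2 - S" using cc_ss[OF g] by (simp_all add: S_def)
  have U: "U$1$1 = 0" "U$2$2 = 0" "U$1$2 = - U$2$1" using sk by (auto simp: skew2_def)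
  have Un: "(U *v n)$1 = - U$2$1 * n$2" "(U *v n)$2 = U$2$1 * n$1" by (simp_all add: mv2 U)
  have c1: "(cc \<gamma> *\<^sub>R u - (ss \<gamma> / \<gamma>) *\<^sub>R ((u \<bullet> n) *\<^sub>R n) + (ss \<gamma> * \<gamma> * r) *\<^sub>R (U *v n))$1
       = (u - (2 * (u \<bullet> n)) *\<^sub>R n)$1"
    using alg1[OF n h, of "ss \<gamma> * \<gamma>"] by (simp add: cc_ss[OF g] inner2 Un algebra_simps)
  have c2: "(cc \<gamma> *\<^sub>R u - (ss \<gamma> / \<gamma>) *\<^sub>R ((u \<bullet> n) *\<^sub>R n) + (ss \<gamma> * \<gamma> * r) *\<^sub>R (U *v n))$2
       = (u - (2 * (u \<bullet> n)) *\<^sub>R n)$2"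
    using alg2[OF n h, of "ss \<gamma> * \<gamma>"] by (simp add: cc_ss[OF g] inner2 Un algebra_simps)
  define M where "M = (ss \<gamma> / (\<gamma> * r)) *\<^sub>R wedge n u + U - (ss \<gamma> / \<gamma>) *\<^sub>R wedge n (U *v n)"
  have w1: "wedge n (U *v n) $1$2 = - U$2$1" "wedge n (U *v n) $2$1 = U$2$1"
  proof -
    have "U$2$1*(n$1^2+n$2^2) = U$2$1" using n by simp
    then have nn: "n$1*(n$1*U$2$1) + n$2*(n$2*U$2$1) = U$2$1" by (simp add: algebra_simps power2_eq_square)
    show "wedge n (U *v n) $1$2 = - U$2$1" "wedge n (U *v n) $2$1 = U$2$1"
      using nn by (simp_all add: wedge2 Un algebra_simps)
  qed
  have hu: "u$1*n$2 - n$1*u$2 = - r*U$2$1" using h by (simp add: algebra_simps)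
  have wu: "wedge n u $1$2 = -r*U$2$1" "wedge n u $2$1 = r*U$2$1" using hu by (simp_all add: wedge2 algebra_simps)
  have m12: "M$1$2 = U$1$2" unfolding M_def using r g
    by (simp add: wu w1)
  have m21: "M$2$1 = U$2$1" unfolding M_def using r g
    by (simp add: wu w1)
  have "M = U" unfolding mat2_eq using m12 m21 by (simp add: M_def wedge2)
  then show ?thesis unfolding collision_map_def M_def using c1 c2 vec2_eq by auto
qed
lemma sph_iff: fixes a p w :: "real^2" assumes "a \<in> sphere p R" "R > 0"
  shows "a + t *\<^sub>R w \<in> sphere p R \<longleftrightarrow> t * (t * (w \<bullet> w) - 2 * (w \<bullet> (p - a))) = 0"
proof -
  define d where "d = p - a"
  have dd: "d \<bullet> d = R^2" using assms unfolding d_def by (simp add: dist_norm power2_norm_eq_inner[symmetric])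
  have "a + t *\<^sub>R w \<in> sphere p R \<longleftrightarrow> norm (d - t *\<^sub>R w) = R"
    unfolding d_def mem_sphere dist_norm by (simp add: diff_diff_eq)
  also have "\<dots> \<longleftrightarrow> (d - t *\<^sub>R w) \<bullet> (d - t *\<^sub>R w) = R^2"
    using assms(2) by (metis norm_ge_zero power2_eq_imp_eq power2_norm_eq_inner order.strict_implies_order)
  also have "(d - t *\<^sub>R w) \<bullet> (d - t *\<^sub>R w) = d \<bullet> d - 2 * t * (w \<bullet> d) + t^2 * (w \<bullet> w)"
    by (simp add: inner_diff_left inner_diff_right inner_commute power2_eq_square algebra_simps)
  also have "(d \<bullet> d - 2 * t * (w \<bullet> d) + t^2 * (w \<bullet> w) = R^2) \<longleftrightarrow> t * (t * (w \<bullet> w) - 2 * (w \<bullet> d)) = 0"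
    using dd by (simp add: algebra_simps power2_eq_square)
  finally show ?thesis by (simp add: d_def)
qed

lemma next_time_eq: fixes a p w :: "real^2" assumes "a \<in> sphere p R" "R > 0" "w \<bullet> (p - a) > 0"
  shows "next_time p R a w = 2 * (w \<bullet> (p - a)) / (w \<bullet> w)"
    and "a + (2 * (w \<bullet> (p - a)) / (w \<bullet> w)) *\<^sub>R w \<in> sphere p R"
proof -
  have "w \<noteq> 0" using assms(3) by auto
  then have ww: "w \<bullet> w > 0" by simp
  define t0 where "t0 = 2 * (w \<bullet> (p - a)) / (w \<bullet> w)"
  have t0: "t0 > 0" using ww assms(3) by (simp add: t0_def)
  have "{t. 0 < t \<and> a + t *\<^sub>R w \<in> sphere p R} = {t0}"
  proof (rule set_eqI)
    fix t
    show "t \<in> {t. 0 < t \<and> a + t *\<^sub>R w \<in> sphere p R} \<longleftrightarrow> t \<in> {t0}"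
    proof -
      have "t * (t * (w \<bullet> w) - 2 * (w \<bullet> (p - a))) = 0 \<and> 0 < t \<longleftrightarrow> t = t0"
      proof
        assume h: "t * (t * (w \<bullet> w) - 2 * (w \<bullet> (p - a))) = 0 \<and> 0 < t"
        then have "t * (w \<bullet> w) = 2 * (w \<bullet> (p - a))" by auto
        then show "t = t0" using ww unfolding t0_def by (simp add: eq_divide_eq)
      next
        assume "t = t0"
        then show "t * (t * (w \<bullet> w) - 2 * (w \<bullet> (p - a))) = 0 \<and> 0 < t"
          using ww t0 by (simp add: t0_def)
      qed
      then show ?thesis using sph_iff[OF assms(1,2), of t w] by auto
    qed
  qed
  then show "next_time p R a w = 2 * (w \<bullet> (p - a)) / (w \<bullet> w)"
    by (simp add: next_time_def t0_def)
  show "a + (2 * (w \<bullet> (p - a)) / (w \<bullet> w)) *\<^sub>R w \<in> sphere p R"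
    using sph_iff[OF assms(1,2)] ww by simp
qed

definition cross2 :: "real^2 \<Rightarrow> real^2 \<Rightarrow> real" where
  "cross2 x y = x$1*y$2 - x$2*y$1"

lemma c1: fixes a b c d :: real assumes "a^2+b^2 = 1"
  shows "c - (c*a + d*b)*a = b * (c*b - d*a)"
proof -
  have "c = c*(a^2+b^2)" using assms by simp
  then show ?thesis by (simp add: algebra_simps power2_eq_square)
qed

lemma c2: fixes a b c d :: real assumes "a^2+b^2 = 1"
  shows "d - (c*a + d*b)*b = - a * (c*b - d*a)"
proof -
  have "d = d*(a^2+b^2)" using assms by simp
  then show ?thesis by (simp add: algebra_simps power2_eq_square)
qed

lemma roll_iff:
  fixes n u :: "real^2" and U :: "real^2^2"
  assumes n: "n$1^2 + n$2^2 = 1" and sk: "skew2 U"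
  shows "(let v = u - r *\<^sub>R (U *v n) in v - (v \<bullet> n) *\<^sub>R n = 0) \<longleftrightarrow>
     cross2 u n + r*U$2$1 = 0"
proof -
  define v where "v = u - r *\<^sub>R (U *v n)"
  have v1: "v$1 = u$1 + r*U$2$1*n$2" and v2: "v$2 = u$2 - r*U$2$1*n$1"
    using sk by (simp_all add: v_def mv2 skew2_def)
  have "r*U$2$1*(n$1^2 + n$2^2) = r*U$2$1" using n by simp
  then have X: "v$1*n$2 - v$2*n$1 = cross2 u n + r*U$2$1"
    unfolding v1 v2 cross2_def by (simp add: algebra_simps power2_eq_square)
  have nz: "n$1 \<noteq> 0 \<or> n$2 \<noteq> 0" using n by auto
  have "(v - (v \<bullet> n) *\<^sub>R n = 0) \<longleftrightarrow> v$1*n$2 - v$2*n$1 = 0"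
    unfolding vec2_eq using c1[OF n, of "v$1" "v$2"] c2[OF n, of "v$2" "v$1"] nz by (auto simp: inner2)
  also have "\<dots> \<longleftrightarrow> cross2 u n + r*U$2$1 = 0" by (simp only: X)
  finally show ?thesis unfolding Let_def v_def[symmetric] .
qed

lemma cross2_lin: "cross2 x (y - c *\<^sub>R x) = cross2 x y" "cross2 (x - c *\<^sub>R y) y = cross2 x y"
  by (simp_all add: cross2_def algebra_simps)

lemma sphere_sq: "(a::real^2) \<in> sphere p R \<Longrightarrow> (p$1 - a$1)^2 + (p$2 - a$2)^2 = R^2"
proof -
  assume "a \<in> sphere p R"
  then have "norm (p - a) = R" by (simp add: dist_norm)
  then have "(p - a) \<bullet> (p - a) = R^2" by (metis power2_norm_eq_inner)
  then show ?thesis by (simp add: inner2 power2_eq_square)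
qed

lemma nu_unit: assumes "(a::real^2) \<in> sphere p R" "R > 0"
  shows "(inward_normal p R a)$1^2 + (inward_normal p R a)$2^2 = 1"
    and "inward_normal p R a \<bullet> inward_normal p R a = 1"
proof -
  have "(p$1 - a$1)^2 + (p$2 - a$2)^2 = R^2" by (rule sphere_sq[OF assms(1)])
  then show 1: "(inward_normal p R a)$1^2 + (inward_normal p R a)$2^2 = 1"
    using assms(2) by (simp add: inward_normal_def power_divide add_divide_distrib[symmetric])
  then show "inward_normal p R a \<bullet> inward_normal p R a = 1" by (simp add: inner2 power2_eq_square)
qed

lemma rolling_iff: assumes "(a::real^2) \<in> sphere p R" "R > 0" "skew2 U"
  shows "rolling_impact p R r a u U \<longleftrightarrow> cross2 u (inward_normal p R a) + r*U$2$1 = 0"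
  unfolding rolling_impact_def using roll_iff[OF nu_unit(1)[OF assms(1,2)] assms(3)] by simp

lemma step:
  fixes a p u :: "real^2" and U :: "real^2^2"
  assumes g: "\<gamma> > 0" and r: "r > 0" and R: "R > 0" and sk: "skew2 U"
    and a: "a \<in> sphere p R" and un: "u \<bullet> inward_normal p R a < 0"
    and ro: "rolling_impact p R r a u U"
  defines "w \<equiv> u - (2 * (u \<bullet> inward_normal p R a)) *\<^sub>R inward_normal p R a"
  shows "collision_map \<gamma> r (inward_normal p R a) (u, U) = (w, U)"
    and "next_time p R a w = - 2 * R * (u \<bullet> inward_normal p R a) / (u \<bullet> u)"
    and "a + next_time p R a w *\<^sub>R w \<in> sphere p R"
    and "w \<bullet> inward_normal p R (a + next_time p R a w *\<^sub>R w) = u \<bullet> inward_normal p R a"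
    and "w \<bullet> w = u \<bullet> u"
    and "rolling_impact p R r (a + next_time p R a w *\<^sub>R w) w U"
proof -
  define n where "n = inward_normal p R a"
  have nn: "n \<bullet> n = 1" using nu_unit[OF a R] by (simp add: n_def)
  have h: "cross2 u n + r*U$2$1 = 0" using ro rolling_iff[OF a R sk] by (simp add: n_def)
  show "collision_map \<gamma> r (inward_normal p R a) (u, U) = (w, U)"
    unfolding w_def using cm[OF g r nu_unit(1)[OF a R] sk] h by (simp add: n_def cross2_def)
  have wn: "w \<bullet> n = - (u \<bullet> n)" unfolding w_def n_def[symmetric] using nn
    by (simp add: inner_diff_left)
  have ww: "w \<bullet> w = u \<bullet> u" unfolding w_def n_def[symmetric] using nn
    by (simp add: inner_diff_left inner_diff_right inner_commute algebra_simps power2_eq_square)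
  then show "w \<bullet> w = u \<bullet> u" .
  have pa: "p - a = R *\<^sub>R n" using R by (simp add: n_def inward_normal_def)
  have wpa: "w \<bullet> (p - a) = - R * (u \<bullet> n)" unfolding pa using wn by simp
  have pos: "w \<bullet> (p - a) > 0" unfolding wpa using R un by (simp add: n_def mult_pos_neg)
  have uu: "u \<bullet> u > 0" using un by (metis inner_gt_zero_iff inner_zero_left less_irrefl)
  define t where "t = next_time p R a w"
  have t: "t = - 2 * R * (u \<bullet> n) / (u \<bullet> u)"
    unfolding t_def next_time_eq(1)[OF a R pos] wpa ww by simp
  then show "next_time p R a w = - 2 * R * (u \<bullet> inward_normal p R a) / (u \<bullet> u)" by (simp add: t_def n_def)
  show "a + next_time p R a w *\<^sub>R w \<in> sphere p R"
    using next_time_eq[OF a R pos] by simp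
  have n': "inward_normal p R (a + t *\<^sub>R w) = n - (t / R) *\<^sub>R w"
    using R by (simp add: inward_normal_def n_def algebra_simps)
  have "w \<bullet> (n - (t / R) *\<^sub>R w) = - (u \<bullet> n) - (t/R) * (u \<bullet> u)"
    using wn ww by (simp add: inner_diff_right)
  also have "\<dots> = u \<bullet> n" unfolding t using R uu by simp
  finally show "w \<bullet> inward_normal p R (a + next_time p R a w *\<^sub>R w) = u \<bullet> inward_normal p R a"
    using n' by (simp add: t_def n_def)
  have a': "a + t *\<^sub>R w \<in> sphere p R" using next_time_eq[OF a R pos] by (simp add: t_def)
  have "cross2 w (n - (t / R) *\<^sub>R w) = cross2 u n"
    unfolding w_def n_def[symmetric] cross2_lin ..
  then show "rolling_impact p R r (a + next_time p R a w *\<^sub>R w) w U"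
    unfolding rolling_iff[OF a' R sk, unfolded t_def] using h n' by (simp add: t_def)
qed


lemma so2_skew: "in_so2 U \<Longrightarrow> skew2 U"
proof -
  assume so: "in_so2 U"
  have h: "U$j$i = - U$i$j" for i j
  proof -
    have "transpose U $ i $ j = (- U) $ i $ j" using so unfolding in_so2_def by simp
    then show "U$j$i = - U$i$j" by (simp add: transpose_def)
  qed
  show ?thesis unfolding skew2_def using h[of 1 1] h[of 2 2] h[of 1 2] by auto
qed

theorem proposition2p11:
  fixes \<gamma> r R :: real and p a0 u0 :: "real^2" and U0 :: "real^2^2"
  assumes "\<gamma> > 0" and "r > 0" and "R > 0"
    and "in_so2 U0"
    and "a0 \<in> sphere p R"
    and "u0 \<bullet> inward_normal p R a0 < 0"
    and "rolling_impact p R r a0 u0 U0"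
  shows "\<forall>k. (case collisions \<gamma> r p R (a0, u0, U0) k of (a, u, U) \<Rightarrow>
              a \<in> sphere p R \<and> rolling_impact p R r a u U
            \<and> fst (collision_map \<gamma> r (inward_normal p R a) (u, U))
                = u - (2 * (u \<bullet> inward_normal p R a)) *\<^sub>R inward_normal p R a)
          \<and> flight_time \<gamma> r p R (a0, u0, U0) k = flight_time \<gamma> r p R (a0, u0, U0) 0"
proof -
  have sk: "skew2 U0" using so2_skew assms(4) .
  define c where "c = u0 \<bullet> inward_normal p R a0"
  define Q where "Q k \<longleftrightarrow> (\<exists>a u. collisions \<gamma> r p R (a0, u0, U0) k = (a, u, U0) \<and> a \<in> sphere p R
      \<and> u \<bullet> inward_normal p R a = c \<and> u \<bullet> u = u0 \<bullet> u0 \<and> rolling_impact p R r a u U0)" for k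
  have Qk: "Q k" for k
  proof (induction k)
    case 0
    then show ?case using assms by (auto simp: Q_def c_def)
  next
    case (Suc k)
    then obtain a u where e: "collisions \<gamma> r p R (a0, u0, U0) k = (a, u, U0)" and a: "a \<in> sphere p R"
      and un: "u \<bullet> inward_normal p R a = c" and uu: "u \<bullet> u = u0 \<bullet> u0" and ro: "rolling_impact p R r a u U0"
      unfolding Q_def by blast
    have un': "u \<bullet> inward_normal p R a < 0" using un assms(6) by (simp add: c_def)
    note st = step[OF assms(1-3) sk a un' ro]
    show ?case unfolding Q_def using st un uu by (simp add: e)
  qed
  define T where "T = - 2 * R * c / (u0 \<bullet> u0)"
  have "(case collisions \<gamma> r p R (a0, u0, U0) k of (a, u, U) \<Rightarrow>
              a \<in> sphere p R \<and> rolling_impact p R r a u U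
            \<and> fst (collision_map \<gamma> r (inward_normal p R a) (u, U))
                = u - (2 * (u \<bullet> inward_normal p R a)) *\<^sub>R inward_normal p R a)
          \<and> flight_time \<gamma> r p R (a0, u0, U0) k = T" for k
  proof -
    obtain a u where e: "collisions \<gamma> r p R (a0, u0, U0) k = (a, u, U0)" and a: "a \<in> sphere p R"
      and un: "u \<bullet> inward_normal p R a = c" and uu: "u \<bullet> u = u0 \<bullet> u0" and ro: "rolling_impact p R r a u U0"
      using Qk[of k] unfolding Q_def by blast
    have un': "u \<bullet> inward_normal p R a < 0" using un assms(6) by (simp add: c_def)
    note st = step[OF assms(1-3) sk a un' ro]
    show ?thesis using st a ro un uu by (simp add: e flight_time_def T_def)
  qed
  then show ?thesis by simp
qed

end
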